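(* Let $d>1$ be an integer and write $d=2^n3^mb$ with $\gcd(b,6)=1$. Let $a$ be an integer with $0\le a<d$, and let $f$ be the multiplicative order of $3/2$ modulo $b$. Then for every positive integer $x$ not divisible by $3$ there exists an admissible vector $s\in\mathcal{E}(x)$ with $v_s(x)\equiv a\pmod d$ and $l(s)\le 2(b-1)f+n+1$.
   Context: Let $T_0^{-1}(x)=2x$ and $T_1^{-1}(x)=(2x-1)/3$, viewed as maps $\mathbb{Q}\to\mathbb{Q}$. For $s=(s_0,s_1,\dots,s_k)$ with $k\ge 0$ and all $s_i$ nonnegative integers, the length of $s$ is $l(s)=k$ and $v_s=T_0^{-s_0}\circ T_1^{-1}\circ T_0^{-s_1}\circ T_1^{-1}\circ\cdots\circ T_1^{-1}\circ T_0^{-s_k}$ (with $k$ occurrences of $T_1^{-1}$). The vector $s$ is admissible for a positive integer $x$ if $v_s(x)$ is a positive integer; $\mathcal{E}(x)$ denotes the set of vectors admissible for $x$. *)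

theory Defs
  imports "HOL-Number_Theory.Number_Theory"
begin

definition T0inv :: "rat \<Rightarrow> rat" where
  "T0inv x = 2 * x"

definition T1inv :: "rat \<Rightarrow> rat" where
  "T1inv x = (2 * x - 1) / 3"

text \<open>A vector s = (s_0,...,s_k) is a nonempty list; v_s = T0^{-s_0} o T1^{-1} o T0^{-s_1} o ... o T0^{-s_k}.\<close>
fun vs :: "nat list \<Rightarrow> rat \<Rightarrow> rat" where
  "vs [] = id"
| "vs [s0] = T0inv ^^ s0"
| "vs (s0 # rest) = (T0inv ^^ s0) \<circ> T1inv \<circ> vs rest"

text \<open>length l(s) = k for s = (s_0,...,s_k)\<close>
definition len :: "nat list \<Rightarrow> nat" where
  "len s = length s - 1"

definition admissible :: "nat list \<Rightarrow> nat \<Rightarrow> bool" where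
  "admissible s x \<longleftrightarrow> s \<noteq> [] \<and> (\<exists>k::nat. k > 0 \<and> vs s (of_nat x) = of_nat k)"

definition E :: "nat \<Rightarrow> nat list set" where
  "E x = {s. admissible s x}"

definition ord32 :: "nat \<Rightarrow> nat" where
  "ord32 b = ord b (3 * modular_inverse b 2)"

end

theory Submission
  imports Defs
begin

fun Nn :: "nat list \<Rightarrow> nat" where
  "Nn [] = 0" | "Nn [_] = 0" | "Nn (a # b # c) = 2^a * (2 * Nn (b # c) + 3^(length c))"

definition Tl :: "nat list \<Rightarrow> nat" where "Tl s = sum_list s + (length s - 1)"

lemma T0pow: "(T0inv ^^ a) z = 2^a * z"
  by (induction a arbitrary: z) (simp_all add: T0inv_def)

lemma Nn_Cons: "r \<noteq> [] \<Longrightarrow> Nn (a # r) = 2^a * (2 * Nn r + 3^(length r - 1))"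
  by (cases r) auto

lemma closed: "s \<noteq> [] \<Longrightarrow> 3^(length s - 1) * vs s y = 2^(Tl s) * y - of_nat (Nn s)"
proof (induction s arbitrary: y rule: vs.induct)
  case 1 then show ?case by simp
next
  case (2 s0) then show ?case by (simp add: T0pow Tl_def)
next
  case (3 s0 v va)
  have IH: "3^(length va) * vs (v # va) y = 2^(Tl (v#va)) * y - of_nat (Nn (v#va))"
    using 3 by simp
  have "vs (s0 # v # va) y = (T0inv ^^ s0) (T1inv (vs (v#va) y))" by simp
  also have "\<dots> = 2^s0 * ((2 * vs (v # va) y - 1) / 3)"
    by (simp add: T0pow T1inv_def)
  finally have "3^(length (s0#v#va) - 1) * vs (s0 # v # va) y = 3^(length va) * 3 * (2^s0 * ((2 * vs (v # va) y - 1) / 3))"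
    by simp
  also have "\<dots> = 2^s0 * (2 * (3^(length va) * vs (v # va) y) - 3^length va)"
    by (simp add: field_simps)
  also have "\<dots> = 2^s0 * (2 * (2^(Tl (v#va)) * y - of_nat (Nn (v#va))) - 3^length va)"
    using IH by simp
  also have "\<dots> = 2^(Tl (s0#v#va)) * y - of_nat (Nn (s0#v#va))"
    by (simp add: Tl_def algebra_simps power_add)
  finally show ?case .
qed

definition cat :: "nat list \<Rightarrow> nat list \<Rightarrow> nat list" where
  "cat s1 s2 = butlast s1 @ (last s1 + hd s2) # tl s2"

lemma cat_Cons: "s1 \<noteq> [] \<Longrightarrow> cat (a # s1) s2 = a # cat s1 s2"
  by (simp add: cat_def)

lemma cat_single: "s2 \<noteq> [] \<Longrightarrow> cat [a] s2 = (a + hd s2) # tl s2"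
  by (simp add: cat_def)

lemma length_cat: "s1 \<noteq> [] \<Longrightarrow> s2 \<noteq> [] \<Longrightarrow> length (cat s1 s2) = length s1 + length s2 - 1"
  by (cases s2) (auto simp: cat_def)

lemma sum_cat: "s1 \<noteq> [] \<Longrightarrow> s2 \<noteq> [] \<Longrightarrow> sum_list (cat s1 s2) = sum_list s1 + sum_list s2"
proof -
  assume a: "s1 \<noteq> []" "s2 \<noteq> []"
  have "sum_list s1 = sum_list (butlast s1) + last s1"
    using a by (metis append_butlast_last_id sum_list_append sum_list_simps add.commute add_0 )
  moreover have "sum_list s2 = hd s2 + sum_list (tl s2)"
    using a by (cases s2) auto
  ultimately show ?thesis by (simp add: cat_def)
qed

lemma Tl_cat: "s1 \<noteq> [] \<Longrightarrow> s2 \<noteq> [] \<Longrightarrow> Tl (cat s1 s2) = Tl s1 + Tl s2"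
  by (simp add: Tl_def length_cat sum_cat) (cases s1; cases s2; simp)

lemma cat_ne: "cat s1 s2 \<noteq> []" by (simp add: cat_def)

lemma Nn_cat: "s1 \<noteq> [] \<Longrightarrow> s2 \<noteq> [] \<Longrightarrow> Nn (cat s1 s2) = 2^(Tl s1) * Nn s2 + 3^(length s2 - 1) * Nn s1"
proof (induction s1)
  case Nil then show ?case by simp
next
  case (Cons a s1)
  show ?case
  proof (cases "s1 = []")
    case True
    obtain c r where s2: "s2 = c # r" using Cons.prems by (cases s2) auto
    show ?thesis
    proof (cases "r = []")
      case True then show ?thesis using \<open>s1 = []\<close> s2 by (simp add: cat_single)
    next
      case False then show ?thesis using \<open>s1 = []\<close> s2 by (simp add: cat_single Tl_def Nn_Cons power_add)
    qed
  next
    case False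
    have "Nn (cat (a # s1) s2) = 2^a * (2 * Nn (cat s1 s2) + 3^(length (cat s1 s2) - 1))"
      by (simp add: cat_Cons False Nn_Cons cat_ne)
    also have "\<dots> = 2^a * (2 * (2^(Tl s1) * Nn s2 + 3^(length s2 - 1) * Nn s1) + 3^(length s1 - 1 + (length s2 - 1)))"
      using Cons False length_cat[of s1 s2]
      by (simp add: Suc_leI)
    also have "\<dots> = 2^(Tl (a#s1)) * Nn s2 + 3^(length s2 - 1) * Nn (a#s1)"
      using False by (cases s1) (simp_all add: Nn_Cons Tl_def algebra_simps power_add)
    finally show ?thesis .
  qed
qed

lemma Nn_snoc: "Nn (xs @ [c]) = Nn (xs @ [c'])"
proof (induction xs)
  case Nil then show ?case by simp
next
  case (Cons a xs)
  then show ?case by (simp add: Nn_Cons)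
qed


lemma Nn_zeros: "Nn (replicate j 0 @ [ee]) + 2^j = 3^j"
proof (induction j)
  case 0 then show ?case by simp
next
  case (Suc j)
  have "Nn (replicate (Suc j) 0 @ [ee]) = 2 * Nn (replicate j 0 @ [ee]) + 3^j"
    by (simp add: Nn_Cons)
  then show ?case using Suc by simp
qed

lemma Nn_A: "Nn (g # replicate j 0 @ [ee]) + 2^g * 2^(j+1) = 2^g * 3^(j+1)"
proof -
  have "Nn (g # replicate j 0 @ [ee]) = 2^g * (2 * Nn (replicate j 0 @ [ee]) + 3^j)"
    by (simp add: Nn_Cons)
  then have "Nn (g # replicate j 0 @ [ee]) + 2^g * 2^(j+1) = 2^g * (2 * Nn (replicate j 0 @ [ee]) + 3^j + 2^(j+1))"
    by (simp add: algebra_simps)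
  also have "2 * Nn (replicate j 0 @ [ee]) + 3^j + 2^(j+1) = 3^(j+1)"
    using Nn_zeros[of j ee] by simp
  finally show ?thesis .
qed

lemma Nn_U0: "Nn (replicate j 0 @ [1, 0]) + 2^(j+1) = 3^(j+1) + 2^j"
proof (induction j)
  case 0 then show ?case by simp
next
  case (Suc j)
  have "Nn (replicate (Suc j) 0 @ [1,0]) = 2 * Nn (replicate j 0 @ [1,0]) + 3^(j+1)"
    by (simp add: Nn_Cons)
  then show ?case using Suc by simp
qed

lemma Nn_U: "Nn (g # replicate j 0 @ [1, 0]) + 2^g * 2^(j+2) = 2^g * (3^(j+2) + 2^(j+1))"
proof -
  have "Nn (g # replicate j 0 @ [1,0]) = 2^g * (2 * Nn (replicate j 0 @ [1,0]) + 3^(j+1))"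
    by (simp add: Nn_Cons)
  then have "Nn (g # replicate j 0 @ [1,0]) + 2^g * 2^(j+2) = 2^g * (2 * Nn (replicate j 0 @ [1,0]) + 3^(j+1) + 2^(j+2))"
    by (simp add: algebra_simps)
  also have "2 * Nn (replicate j 0 @ [1,0]) + 3^(j+1) + 2^(j+2) = 3^(j+2) + 2^(j+1)"
    using Nn_U0[of j] by simp
  finally show ?thesis .
qed

definition blk :: "nat \<Rightarrow> nat \<Rightarrow> bool \<Rightarrow> nat list" where
  "blk ph f u = (if u then (ph - 1) # replicate (f - 2) 0 @ [1, 0] else replicate (f + 1) 0)"

lemma blk_ne: "blk ph f u \<noteq> []" by (simp add: blk_def)

lemma length_blk: "2 \<le> f \<Longrightarrow> length (blk ph f u) = f + 1"
proof -
  assume f: "2 \<le> f"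
  then have "Suc (Suc (f-2)) = f" by arith
  then show ?thesis by (cases u) (simp_all add: blk_def)
qed

lemma Tl_blk: "2 \<le> f \<Longrightarrow> 1 \<le> ph \<Longrightarrow> Tl (blk ph f u) = (if u then ph + f else f)"
proof -
  assume f: "2 \<le> f" and p: "1 \<le> ph"
  then have "Suc (Suc (ph + f - 2)) = ph + f" by arith
  then show ?thesis using f p by (cases u) (simp_all add: blk_def Tl_def sum_list_replicate)
qed

lemma Nn_blk_F: "2 \<le> f \<Longrightarrow> int (Nn (blk ph f False)) = 3^f - 2^f"
proof -
  assume f: "2 \<le> f"
  then obtain k where k: "f = Suc (Suc k)" by (metis add_2_eq_Suc le_Suc_ex)
  define L where "L = 0 # replicate (f - 1) 0 @ [0::nat]"
  have X: "blk ph f False = L"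
    by (simp add: L_def blk_def k replicate_append_same)
  have "Nn (0 # replicate (f - 1) 0 @ [0]) + 2^0 * 2^(f - 1 + 1) = 2^0 * 3^(f - 1 + 1)"
    by (rule Nn_A)
  then have "Nn L + 2^(f - 1 + 1) = 3^(f - 1 + 1)" by (simp only: L_def power_0 mult_1)
  then have "Nn L + 2^f = 3^f" using f by simp
  then have "int (Nn L + 2^f) = int (3^f)" by simp
  then show ?thesis unfolding X by simp
qed

lemma Nn_blk_T: "2 \<le> f \<Longrightarrow> int (Nn (blk ph f True)) = 2^(ph - 1) * (3^f + 2^(f - 1) - 2^f)"
proof -
  assume f: "2 \<le> f"
  define L where "L = (ph - 1) # replicate (f - 2) 0 @ [1, 0::nat]"
  have X: "blk ph f True = L" by (simp add: L_def blk_def)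
  have "Nn ((ph - 1) # replicate (f - 2) 0 @ [1, 0]) + 2^(ph - 1) * 2^(f - 2 + 2) = 2^(ph - 1) * (3^(f - 2 + 2) + 2^(f - 2 + 1))"
    by (rule Nn_U)
  then have "Nn L + 2^(ph - 1) * 2^(f - 2 + 2) = 2^(ph - 1) * (3^(f - 2 + 2) + 2^(f - 2 + 1))"
    by (simp only: L_def)
  moreover have e1: "f - 2 + 2 = f" and e2: "f - 2 + 1 = f - 1" using f by auto
  ultimately have "Nn L + 2^(ph - 1) * 2^f = 2^(ph - 1) * (3^f + 2^(f - 1))"
    by (simp only: e1 e2)
  then have "int (Nn L + 2^(ph - 1) * 2^f) = int (2^(ph - 1) * (3^f + 2^(f - 1)))"
    by simp
  then show ?thesis unfolding X by (simp add: algebra_simps)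
qed

fun Rof :: "nat \<Rightarrow> nat \<Rightarrow> bool list \<Rightarrow> nat list \<Rightarrow> nat list" where
  "Rof ph f [] A = A"
| "Rof ph f (u # us) A = cat (blk ph f u) (Rof ph f us A)"

fun Mf :: "nat \<Rightarrow> nat \<Rightarrow> bool list \<Rightarrow> nat" where
  "Mf ph f [] = 0"
| "Mf ph f (u # us) = 2^(Tl (blk ph f u)) * Mf ph f us + 3^(f * length us) * Nn (blk ph f u)"

fun Tsum :: "nat \<Rightarrow> nat \<Rightarrow> bool list \<Rightarrow> nat" where
  "Tsum ph f [] = 0"
| "Tsum ph f (u # us) = Tl (blk ph f u) + Tsum ph f us"

lemma Rof_props:
  assumes "A \<noteq> []" "length A = f + 1" "us = [] \<or> 2 \<le> f"
  shows "Rof ph f us A \<noteq> [] \<and> length (Rof ph f us A) = f * length us + f + 1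
     \<and> Tl (Rof ph f us A) = Tsum ph f us + Tl A
     \<and> Nn (Rof ph f us A) = 2^(Tsum ph f us) * Nn A + 3^f * Mf ph f us"
  using assms(3)
proof (induction us)
  case Nil then show ?case using assms by simp
next
  case (Cons u us)
  have f: "2 \<le> f" using Cons.prems by simp
  have IH: "Rof ph f us A \<noteq> [] \<and> length (Rof ph f us A) = f * length us + f + 1
     \<and> Tl (Rof ph f us A) = Tsum ph f us + Tl A
     \<and> Nn (Rof ph f us A) = 2^(Tsum ph f us) * Nn A + 3^f * Mf ph f us"
    using Cons f by auto
  have ne: "Rof ph f (u # us) A \<noteq> []" by (simp add: cat_ne)
  have len: "length (Rof ph f (u # us) A) = f * length (u#us) + f + 1"
    using IH length_cat[OF blk_ne, of "Rof ph f us A" ph f u] length_blk[OF f] by simp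
  have tl: "Tl (Rof ph f (u # us) A) = Tsum ph f (u#us) + Tl A"
    using IH Tl_cat[OF blk_ne, of "Rof ph f us A" ph f u] by simp
  have "Nn (Rof ph f (u # us) A) = 2^(Tl (blk ph f u)) * Nn (Rof ph f us A) + 3^(length (Rof ph f us A) - 1) * Nn (blk ph f u)"
    using IH Nn_cat[OF blk_ne, of "Rof ph f us A" ph f u] by simp
  also have "\<dots> = 2^(Tsum ph f (u#us)) * Nn A + 3^f * Mf ph f (u#us)"
    using IH by (simp add: algebra_simps power_add)
  finally show ?case using ne len tl by simp
qed


lemma pow_split: "1 \<le> ph \<Longrightarrow> 2 \<le> f \<Longrightarrow> (2::int)^(ph-1) * 2^(f-1) = 2^ph * 2^(f-2)"
proof -
  assume a: "1 \<le> ph" "2 \<le> f"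
  have e: "ph - 1 + (f - 1) = ph + (f - 2)" using a by arith
  have "(2::int)^(ph-1) * 2^(f-1) = 2^(ph - 1 + (f - 1))" by (simp add: power_add)
  also have "\<dots> = 2^(ph + (f - 2))" by (simp only: e)
  also have "\<dots> = 2^ph * 2^(f-2)" by (simp add: power_add)
  finally show ?thesis .
qed

lemma Mf_mod:
  assumes f: "us = [] \<or> 2 \<le> f" and ph: "1 \<le> ph"
    and h2: "int b dvd 2^ph - 1" and h3: "int b dvd 3^f - 2^f"
  shows "int b dvd 3^f * int (Mf ph f us) - 3^(f * length us) * 2^(f-2) * int (length (filter id us))"
  using f
proof (induction us)
  case Nil then show ?case by simp
next
  case (Cons u us)
  have f2: "2 \<le> f" using Cons.prems by simp
  define T where "T = Tl (blk ph f u)"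
  define N where "N = int (Nn (blk ph f u))"
  define Mr where "Mr = int (Mf ph f us)"
  define X where "X = (3::int)^(f * length us) * 2^(f-2) * int (length (filter id us))"
  define cu where "cu = (if u then 1 else 0::int)"
  have IH: "int b dvd 3^f * Mr - X" using Cons.IH[OF disjI2[OF f2]] unfolding Mr_def X_def .
  have dT: "int b dvd 2^T - 3^f"
  proof (cases u)
    case True
    then have "T = ph + f" using Tl_blk[OF f2 ph] by (simp add: T_def)
    then have eq: "(2::int)^T - 3^f = (2^ph - 1) * 2^f - (3^f - 2^f)" by (simp add: power_add algebra_simps)
    show ?thesis unfolding eq by (rule dvd_diff[OF dvd_mult2[OF h2] h3])
  next
    case False
    then have "T = f" using Tl_blk[OF f2 ph] by (simp add: T_def)
    then have eq: "(2::int)^T - 3^f = - (3^f - 2^f)" by simp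
    show ?thesis unfolding eq using h3 by (simp only: dvd_minus_iff)
  qed
  have dN: "int b dvd N - 2^(f-2) * cu"
  proof (cases u)
    case True
    have "N = 2^(ph - 1) * (3^f + 2^(f - 1) - 2^f)" using Nn_blk_T[OF f2] True by (simp add: N_def)
    then have "N - 2^(f-2) * cu = 2^(ph-1) * (3^f - 2^f) + (2^(ph-1) * 2^(f-1) - 2^(f-2))"
      using True by (simp add: cu_def algebra_simps)
    also have "\<dots> = 2^(ph-1) * (3^f - 2^f) + 2^(f-2) * (2^ph - 1)"
      using pow_split[OF ph f2] by (simp add: algebra_simps)
    finally have eq: "N - 2^(f-2) * cu = 2^(ph-1) * (3^f - 2^f) + 2^(f-2) * (2^ph - 1)" .
    show ?thesis unfolding eq by (rule dvd_add[OF dvd_mult[OF h3] dvd_mult[OF h2]])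
  next
    case False
    then have eq: "N - 2^(f-2) * cu = 3^f - 2^f" using Nn_blk_F[OF f2] by (simp add: N_def cu_def)
    show ?thesis unfolding eq using h3 .
  qed
  have eqM: "int (Mf ph f (u # us)) = 2^T * Mr + 3^(f * length us) * N"
    by (simp add: T_def Mr_def N_def)
  have cnt: "int (length (filter id (u # us))) = cu + int (length (filter id us))"
    by (simp add: cu_def)
  have eqD: "3^f * int (Mf ph f (u # us)) - 3^(f * length (u#us)) * 2^(f-2) * int (length (filter id (u#us)))
      = 2^T * (3^f * Mr - X) + (2^T - 3^f) * X + 3^f * 3^(f * length us) * (N - 2^(f-2) * cu)"
    unfolding eqM cnt by (simp add: X_def algebra_simps power_add)
  have "int b dvd 2^T * (3^f * Mr - X) + (2^T - 3^f) * X + 3^f * 3^(f * length us) * (N - 2^(f-2) * cu)"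
    by (rule dvd_add[OF dvd_add[OF dvd_mult[OF IH] dvd_mult2[OF dT]] dvd_mult[OF dN]])
  then show ?case unfolding eqD .
qed

lemma two_adic: "\<exists>P0. length P0 \<le> n \<and> (\<forall>L. (2::int)^n dvd int (Nn (P0 @ [L])) + 3^(length P0) * a)"
proof (induction n arbitrary: a)
  case 0 then show ?case by (intro exI[of _ "[]"]) simp
next
  case (Suc n)
  show ?case
  proof (cases "even a")
    case True
    then obtain a2 where a2: "a = 2 * a2" by blast
    obtain P0 where P0: "length P0 \<le> n" "\<forall>L. (2::int)^n dvd int (Nn (P0 @ [L])) + 3^(length P0) * a2"
      using Suc by blast
    define P1 where "P1 = (case P0 of [] \<Rightarrow> [] | e # r \<Rightarrow> Suc e # r)"
    have len: "length P1 = length P0" by (cases P0) (auto simp: P1_def)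
    have NN: "Nn (P1 @ [L]) = 2 * Nn (P0 @ [L])" for L
      by (cases P0) (auto simp: P1_def Nn_Cons)
    show ?thesis
    proof (intro exI[of _ P1] conjI allI)
      show "length P1 \<le> Suc n" using len P0 by simp
      fix L
      have "int (Nn (P1 @ [L])) + 3^(length P1) * a = 2 * (int (Nn (P0 @ [L])) + 3^(length P0) * a2)"
        using NN len a2 by simp
      then show "(2::int)^Suc n dvd int (Nn (P1 @ [L])) + 3^(length P1) * a"
        unfolding power_Suc by (metis P0(2) dvd_refl mult_dvd_mono)
    qed
  next
    case False
    then obtain k where k: "a = 2 * k + 1" by (metis odd_two_times_div_two_succ)
    obtain R where R: "length R \<le> n" "\<forall>L. (2::int)^n dvd int (Nn (R @ [L])) + 3^(length R) * (3 * k + 2)"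
      using Suc by blast
    show ?thesis
    proof (intro exI[of _ "0 # R"] conjI allI)
      show "length (0 # R) \<le> Suc n" using R by simp
      fix L
      have "Nn ((0 # R) @ [L]) = 2 * Nn (R @ [L]) + 3^(length R)"
        by (simp add: Nn_Cons)
      then have "int (Nn ((0 # R) @ [L])) + 3^(length (0 # R)) * a = 2 * (int (Nn (R @ [L])) + 3^(length R) * (3 * k + 2))"
        using k by (simp add: algebra_simps)
      then show "(2::int)^Suc n dvd int (Nn ((0 # R) @ [L])) + 3^(length (0 # R)) * a"
        unfolding power_Suc by (metis R(2) dvd_refl mult_dvd_mono)
    qed
  qed
qed

lemma pow4: "\<exists>h::int. 4^(3^K) = 1 + 3^(K+1) * h \<and> \<not> 3 dvd h"
proof (induction K)
  case 0 then show ?case by (intro exI[of _ 1]) simp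
next
  case (Suc K)
  then obtain h :: int where h: "4^(3^K) = 1 + 3^(K+1) * h" "\<not> 3 dvd h" by blast
  define h' where "h' = h + 3 * (3^K * h^2 + 3^K * 3^K * h^3)"
  have "(4::int)^(3^Suc K) = (4^(3^K))^3" by (simp add: power_mult[symmetric] mult.commute)
  also have "\<dots> = (1 + 3^(K+1) * h)^3" using h by simp
  also have "\<dots> = 1 + 3^(Suc K + 1) * h'"
    by (simp add: h'_def power3_eq_cube power2_eq_square algebra_simps power_add mult_2)
  finally have e: "(4::int)^(3^Suc K) = 1 + 3^(Suc K + 1) * h'" .
  have "\<not> 3 dvd h'"
  proof
    assume "3 dvd h'"
    then have "3 dvd h' - 3 * (3^K * h^2 + 3^K * 3^K * h^3)" by simp
    then show False using h(2) by (simp add: h'_def)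
  qed
  then show ?case using e by blast
qed


lemma dvd_pow_sub1: "(m::int) dvd x - 1 \<Longrightarrow> m dvd x^L - 1"
proof -
  assume "m dvd x - 1"
  then have "[x = 1] (mod m)" by (simp add: cong_iff_dvd_diff)
  then have "[x^L = 1^L] (mod m)" by (rule cong_pow)
  then show ?thesis by (simp add: cong_iff_dvd_diff)
qed

lemma prim3:
  fixes u w :: int
  assumes u: "\<not> 3 dvd u" and w: "\<not> 3 dvd w"
  shows "\<exists>c::nat. (3::int)^K dvd w * 2^c - u"
proof (induction K)
  case 0 then show ?case by simp
next
  case (Suc K)
  obtain c where c: "(3::int)^K dvd w * 2^c - u" using Suc.IH by blast
  show ?case
  proof (cases "K = 0")
    case True
    have "3 dvd w - u \<or> 3 dvd 2*w - u" using u w by presburger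
    then show ?thesis
    proof
      assume "3 dvd w - u" then show ?thesis using True by (intro exI[of _ 0]) simp
    next
      assume "3 dvd 2*w - u" then show ?thesis using True by (intro exI[of _ 1]) (simp add: mult.commute)
    qed
  next
    case False
    obtain t where t: "w * 2^c - u = 3^K * t" using c by (auto elim: dvdE)
    have K1: "K - 1 + 1 = K" using False by simp
    obtain h :: int where h: "4^(3^(K-1)) = 1 + 3^K * h" "\<not> 3 dvd h"
      using pow4[of "K-1"] K1 by auto
    define P :: nat where "P = 2 * 3^(K-1)"
    have hP: "(2::int)^P = 1 + 3^K * h"
      using h(1) by (simp add: P_def power_mult)
    have p3: "prime (3::int)" by simp
    have nh: "\<not> 3 dvd h * u" using h(2) u prime_dvd_mult_iff[OF p3] by blast
    have cases3: "3 dvd t \<or> 3 dvd t + h*u \<or> 3 dvd t + 2*(h*u)" using nh by presburger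
    have wc: "w * 2^c = u + 3^K * t" using t by simp
    have d3K: "(3::int) dvd 3^K" using False by simp
    have key: "\<And>X. (3::int) dvd X \<Longrightarrow> 3^Suc K dvd 3^K * X"
      unfolding power_Suc by (metis dvd_refl mult.commute mult_dvd_mono)
    from cases3 show ?thesis
    proof (elim disjE)
      assume "3 dvd t"
      then show ?thesis using key[of t] t by (intro exI[of _ c]) simp
    next
      assume a: "3 dvd t + h*u"
      have e: "w * 2^(c+P) - u = 3^K * (t + h*u + 3^K*t*h)"
      proof -
        have "w * 2^(c+P) - u = (w*2^c) * 2^P - u" by (simp only: power_add mult.assoc)
        also have "\<dots> = (u + 3^K*t) * (1 + 3^K*h) - u" by (simp only: wc hP)
        also have "\<dots> = 3^K * (t + h*u + 3^K*t*h)" by (simp add: algebra_simps)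
        finally show ?thesis .
      qed
      have "3 dvd t + h*u + 3^K*t*h" using a d3K by (simp add: dvd_add dvd_mult2)
      then show ?thesis using key e by (intro exI[of _ "c+P"]) simp
    next
      assume a: "3 dvd t + 2*(h*u)"
      have e: "w * 2^(c+2*P) - u = 3^K * (t + 2*(h*u) + 3^K*(h*h*u + 2*t*h + 3^K*t*h*h))"
      proof -
        have "w * 2^(c+2*P) - u = (w*2^c) * (2^P)^2 - u"
          by (simp only: power_add mult.commute[of 2 P] power_mult mult.assoc)
        also have "\<dots> = (u + 3^K*t) * (1 + 3^K*h)^2 - u" by (simp only: wc hP)
        also have "\<dots> = 3^K * (t + 2*(h*u) + 3^K*(h*h*u + 2*t*h + 3^K*t*h*h))"
          by (simp add: power2_eq_square algebra_simps)
        finally show ?thesis .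
      qed
      have "3 dvd t + 2*(h*u) + 3^K*(h*h*u + 2*t*h + 3^K*t*h*h)" using a d3K by (simp add: dvd_add dvd_mult2)
      then show ?thesis using key e by (intro exI[of _ "c+2*P"]) simp
    qed
  qed
qed

lemma prim3L:
  fixes u w :: int
  assumes u: "\<not> 3 dvd u" and w: "\<not> 3 dvd w"
  shows "\<exists>c::nat. c \<ge> L \<and> (3::int)^K dvd w * 2^c - u"
proof -
  obtain c0 where c0: "(3::int)^K dvd w * 2^c0 - u" using prim3[OF u w] by blast
  obtain h :: int where h: "4^(3^K) = 1 + 3^(K+1) * h" using pow4[of K] by blast
  have "(3::int)^K dvd 4^(3^K) - 1" using h by (simp add: power_Suc2)
  then have d: "(3::int)^K dvd (4^(3^K))^L - 1" by (rule dvd_pow_sub1)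
  have p2: "(2::int)^(2*3^K) = 4^(3^K)" by (simp add: power_mult)
  have p1: "(2::int)^(L*(2*3^K)) = (4^(3^K))^L"
    unfolding p2[symmetric] by (simp only: mult.commute[of L] power_mult[symmetric])
  have e: "w * 2^(c0 + L * (2 * 3^K)) - u = (w * 2^c0 - u) + w * 2^c0 * ((4^(3^K))^L - 1)"
    by (simp only: power_add p1) (simp add: algebra_simps)
  have "(3::int)^K dvd w * 2^(c0 + L * (2 * 3^K)) - u"
    unfolding e by (rule dvd_add[OF c0 dvd_mult[OF d]])
  moreover have "c0 + L * (2 * 3^K) \<ge> L"
  proof -
    have "(1::nat) \<le> 2*3^K" by simp
    then have "L * 1 \<le> L*(2*3^K)" by (rule mult_le_mono2)
    then show ?thesis by linarith
  qed
  ultimately show ?thesis by blast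
qed

lemma lin_solve:
  fixes c r :: int
  assumes cop: "coprime c (int b)" and b: "b > 0"
  shows "\<exists>t. t < b \<and> int b dvd c * int t - r"
proof -
  obtain i where i: "[c * i = 1] (mod int b)" using cong_solve_coprime_int[OF cop] by blast
  define t where "t = nat ((r * i) mod int b)"
  have ti: "int t = (r * i) mod int b" using b by (simp add: t_def)
  have tb: "t < b" using b ti by (metis of_nat_less_iff pos_mod_bound of_nat_0_less_iff)
  have d1: "int b dvd c * i - 1" using i by (simp add: cong_iff_dvd_diff)
  have d2: "int b dvd (r * i) mod int b - r * i" by (metis dvd_minus_mod dvd_minus_iff minus_diff_eq)
  have e: "c * int t - r = c * ((r * i) mod int b - r * i) + r * (c * i - 1)"
    unfolding ti by (simp add: algebra_simps)
  have "int b dvd c * int t - r" unfolding e by (rule dvd_add[OF dvd_mult[OF d2] dvd_mult[OF d1]])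
  then show ?thesis using tb by blast
qed


lemma pow3_split: "1 \<le> j \<Longrightarrow> (3::int)^j = 3 * 3^(j-1)"
  by (cases j) auto

theorem mainTheorem4:
  fixes d n m b a x :: nat
  assumes "d > 1"
    and "d = 2 ^ n * 3 ^ m * b"
    and "coprime b 6"
    and "a < d"
    and "x > 0"
    and "\<not> 3 dvd x"
  shows "\<exists>s \<in> E x. \<exists>z::nat. vs s (of_nat x) = of_nat z \<and> [z = a] (mod d)
           \<and> len s \<le> 2 * (b - 1) * ord32 b + n + 1"
proof -
  have b0: "b > 0" using assms(1,2) by (cases "b = 0") auto
  have six: "(6::nat) = 2 * 3" by simp
  have "coprime b (2 * 3)" using assms(3) by (subst six[symmetric])
  then have cb2: "coprime b 2" and cb3: "coprime b 3" by (simp_all only: coprime_mult_right_iff)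
  define ph where "ph = totient b"
  have ph1: "1 \<le> ph" using b0 by (simp add: ph_def Suc_le_eq)
  have h2n: "[2^ph = 1] (mod b)" using euler_theorem[of 2 b] cb2 by (simp add: ph_def coprime_commute)
  have "[int (2^ph) = int 1] (mod int b)" using h2n cong_int_iff by blast
  then have h2: "int b dvd 2^ph - 1" by (simp add: cong_iff_dvd_diff)
  define iv :: int where "iv = modular_inverse (int b) 2"
  define a3 :: int where "a3 = 3 * iv"
  have cb2i: "coprime 2 (int b)" using cb2 by (metis coprime_commute coprime_int_iff of_nat_numeral)
  have cb3i: "coprime 3 (int b)" using cb3 by (metis coprime_commute coprime_int_iff of_nat_numeral)
  have iv1: "[2 * iv = 1] (mod int b)" using cong_modular_inverse1[OF cb2i] by (simp add: iv_def)
  have civ: "coprime iv (int b)" using coprime_modular_inverse[OF cb2i] by (simp add: iv_def)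
  define f where "f = ord32 b"
  have fdef: "f = ord (int b) a3" by (simp add: f_def ord32_def a3_def iv_def)
  have copa3: "coprime (int b) a3" using cb3i civ by (simp add: a3_def coprime_commute)
  have fL: "f = (LEAST d. d > 0 \<and> [a3^d = 1] (mod int b))" by (simp add: fdef ord_def copa3)
  have exd: "\<exists>d. d > 0 \<and> [a3^d = 1] (mod int b)"
  proof -
    define a' where "a' = nat (a3 mod int b)"
    have ia: "int a' = a3 mod int b" using b0 by (simp add: a'_def)
    have "coprime (a3 mod int b) (int b)" using copa3 b0 by (simp add: coprime_commute)
    then have "coprime (int a') (int b)" using ia by simp
    then have "coprime a' b" by simp
    then have "[a'^ph = 1] (mod b)" using euler_theorem[of a' b] by (simp add: ph_def)
    then have "[int (a'^ph) = int 1] (mod int b)" using cong_int_iff by blast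
    then have c1: "[(a3 mod int b)^ph = 1] (mod int b)" using ia by simp
    have "[a3 mod int b = a3] (mod int b)" by (simp add: cong_def)
    then have "[(a3 mod int b)^ph = a3^ph] (mod int b)" by (rule cong_pow)
    then have "[a3^ph = 1] (mod int b)" using c1 by (metis cong_sym cong_trans)
    moreover have "ph > 0" using ph1 by simp
    ultimately show ?thesis by blast
  qed
  have fprop: "f > 0 \<and> [a3^f = 1] (mod int b)" unfolding fL by (rule LeastI_ex[OF exd])
  have f1: "1 \<le> f" using fprop by simp
  have of3: "[a3^f = 1] (mod int b)" using fprop by simp
  have fb1': "f = 1" if "b = 1"
  proof -
    have "(LEAST d::nat. d > 0 \<and> [a3^d = 1] (mod int b)) = 1"
      by (rule Least_equality) (use that in auto)
    then show ?thesis using fL by simp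
  qed
  have h3c: "[3^f = 2^f] (mod int b)"
  proof -
    have "[(2*iv)^f = 1^f] (mod int b)" by (rule cong_pow[OF iv1])
    then have "[(2*iv)^f = 1] (mod int b)" by simp
    then have "[3^f * (2*iv)^f = 3^f * 1] (mod int b)" by (rule cong_scalar_left)
    then have c1: "[3^f = 3^f * (2*iv)^f] (mod int b)" by (metis cong_sym mult_1_right)
    have e: "(3::int)^f * (2*iv)^f = a3^f * 2^f" by (simp add: a3_def power_mult_distrib algebra_simps)
    have "[a3^f * 2^f = 1 * 2^f] (mod int b)" by (rule cong_scalar_right[OF of3])
    then show ?thesis using c1 e by (metis cong_trans mult_1)
  qed
  have h3: "int b dvd 3^f - 2^f" using h3c by (simp add: cong_iff_dvd_diff)
  have f2: "2 \<le> f" if b2: "2 \<le> b"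
  proof (rule ccontr)
    assume "\<not> 2 \<le> f"
    then have "f = 1" using f1 by simp
    then have "int b dvd int 1" using h3 by simp
    then have "b dvd 1" by (simp only: int_dvd_int_iff)
    then show False using b2 by simp
  qed
  obtain P0 where P0: "length P0 \<le> n" "\<forall>L. (2::int)^n dvd int (Nn (P0 @ [L])) + 3^(length P0) * int a"
    using two_adic by blast
  define p where "p = length P0"
  define S0 where "S0 = sum_list P0 + p"
  define L where "L = ph * (S0 + n) - S0"
  define P where "P = P0 @ [L]"
  define TP where "TP = Tl P"
  have S0le: "S0 \<le> ph * (S0 + n)"
  proof -
    have h: "S0 + n \<le> ph * (S0 + n)" using mult_le_mono1[OF ph1, of "S0 + n"] by simp
    then show ?thesis by linarith
  qed
  have TPe: "TP = ph * (S0 + n)" using S0le by (simp add: TP_def Tl_def P_def L_def S0_def p_def)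
  have TPn: "n \<le> TP" using S0le TPe
    by (metis add_leD2 le_add2 le_trans mult_le_mono1 ph1 mult_1)
  have Pne: "P \<noteq> []" by (simp add: P_def)
  define NP where "NP = Nn P"
  have dNP: "(2::int)^n dvd int NP + 3^p * int a" using P0(2) by (simp add: NP_def P_def p_def)
  define k where "k = p + f * b"
  define r where "r = int x - 3^k * int a - 3^(f*b) * int NP"
  define c0 where "c0 = (3::int)^(f*(b-1)) * 2^(f-2)"
  have copc0: "coprime c0 (int b)"
    using cb2i cb3i by (simp add: c0_def)
  obtain cnt where cnt: "cnt < b" "int b dvd c0 * int cnt - r" using lin_solve[OF copc0 b0] by blast
  define us where "us = replicate cnt True @ replicate (b - 1 - cnt) False"
  have lus: "length us = b - 1" using cnt(1) by (simp add: us_def)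
  have cus: "length (filter id us) = cnt" by (simp add: us_def)
  have usf: "us = [] \<or> 2 \<le> f"
  proof (cases "b = 1")
    case True then show ?thesis using lus by simp
  next
    case False then show ?thesis using f2 b0 by simp
  qed
  define M where "M = Mf ph f us"
  define Ts where "Ts = Tsum ph f us"
  have Mb: "int b dvd 3^f * int M - c0 * int cnt"
    using Mf_mod[OF usf ph1 h2 h3] lus cus by (simp add: M_def c0_def mult.assoc)
  define K3 where "K3 = k + m"
  define u3 where "u3 = int x - 3^k * int a - 2^TP * 3^f * int M - 3^(f*b) * int NP"
  define w3 where "w3 = (3::int)^f - 2^f"
  have fb1: "1 \<le> f * b" using f1 b0 by (simp add: Suc_le_eq)
  have k1: "1 \<le> k" using fb1 unfolding k_def by linarith
  have nu3: "\<not> 3 dvd u3"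
  proof
    assume a3: "3 dvd u3"
    have "u3 = int x - 3 * (3^(k-1) * int a + 2^TP * 3^(f-1) * int M + 3^(f*b-1) * int NP)"
      using pow3_split[OF k1] pow3_split[OF f1] pow3_split[OF fb1] by (simp add: u3_def algebra_simps)
    then have "int x = u3 + 3 * (3^(k-1) * int a + 2^TP * 3^(f-1) * int M + 3^(f*b-1) * int NP)" by simp
    then have "(3::int) dvd int x" using a3 by simp
    then have "3 dvd x" by presburger
    then show False using assms(6) by simp
  qed
  have p3: "prime (3::int)" by simp
  have nw3: "\<not> 3 dvd w3"
  proof
    assume a3: "3 dvd w3"
    have "w3 = 3 * 3^(f-1) - 2^f" using pow3_split[OF f1] by (simp add: w3_def)
    then have "(2::int)^f = 3 * 3^(f-1) - w3" by simp
    then have "(3::int) dvd 2^f" using a3 by simp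
    then have "(3::int) dvd 2" by (rule prime_dvd_power[OF p3])
    then show False by simp
  qed
  obtain c where c: "c \<ge> TP + Ts" "(3::int)^K3 dvd w3 * 2^c - u3" using prim3L[OF nu3 nw3] by blast
  define gA where "gA = c - TP - Ts"
  have cTP: "c = TP + Ts + gA" using c(1) by (simp add: gA_def)
  define Lam where "Lam = 2 * 3^K3 * ph"
  have Lam0: "Lam > 0" using ph1 by (simp add: Lam_def)
  define Y where "Y = 3^f + 3^f * M + 3^(f*b) * NP"
  define ee where "ee = (Lam - (c + f) mod Lam) + Lam * Y"
  define A where "A = gA # replicate (f-1) 0 @ [ee]"
  have Ane: "A \<noteq> []" "length A = f + 1" using f1 by (simp_all add: A_def)
  have TlA: "Tl A = gA + ee + f" using f1 by (simp add: A_def Tl_def sum_list_replicate)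
  have NnA0: "Nn A + 2^gA * 2^f = 2^gA * 3^f"
    using Nn_A[of gA "f-1" ee] f1 by (simp add: A_def)
  have NnA: "int (Nn A) = 2^gA * w3"
  proof -
    have "int (Nn A + 2^gA * 2^f) = int (2^gA * 3^f)" using NnA0 by simp
    then show ?thesis by (simp add: w3_def algebra_simps)
  qed
  have NnAle: "Nn A \<le> 2^gA * 3^f" using NnA0 by linarith
  define R where "R = Rof ph f us A"
  have RP: "R \<noteq> [] \<and> length R = f * length us + f + 1 \<and> Tl R = Ts + Tl A
     \<and> Nn R = 2^Ts * Nn A + 3^f * M"
    using Rof_props[OF Ane usf] by (simp add: R_def Ts_def M_def)
  have fbe: "f * (b - 1) + f = f * b" using b0 by (cases b) (simp_all add: algebra_simps)
  have lenR: "length R - 1 = f * b" using RP lus fbe by simp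
  define s where "s = cat P R"
  have sne: "s \<noteq> []" by (simp add: s_def cat_ne)
  have lens: "length s - 1 = k"
    using length_cat[OF Pne, of R] RP lus fbe by (simp add: s_def P_def p_def k_def)
  define TOT where "TOT = Tl s"
  have TOTe: "TOT = c + f + ee"
    using Tl_cat[OF Pne, of R] RP TlA cTP by (simp add: TOT_def s_def TP_def)
  have Nns: "Nn s = 2^TP * Nn R + 3^(f*b) * NP"
    using Nn_cat[OF Pne, of R] RP lenR by (simp add: s_def TP_def NP_def)
  have LamTOT: "Lam dvd TOT"
  proof -
    define q where "q = (c + f) div Lam"
    define rr where "rr = (c + f) mod Lam"
    have e1: "c + f = Lam * q + rr" by (simp add: q_def rr_def)
    have e2: "rr < Lam" using Lam0 by (simp add: rr_def)
    have "TOT = Lam * q + Lam + Lam * Y" using TOTe e1 e2 by (simp add: ee_def rr_def[symmetric])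
    also have "\<dots> = Lam * (q + 1 + Y)" by (simp add: algebra_simps)
    finally show ?thesis by simp
  qed
  then obtain j where j: "TOT = Lam * j" by blast
  have h2T3: "(3::int)^K3 dvd 2^TOT - 1"
  proof -
    obtain h :: int where h: "4^(3^K3) = 1 + 3^(K3+1) * h" using pow4[of K3] by blast
    have "(3::int)^K3 dvd 4^(3^K3) - 1" using h by (simp add: power_Suc2)
    then have d: "(3::int)^K3 dvd (4^(3^K3))^(ph * j) - 1" by (rule dvd_pow_sub1)
    have "(2::int)^TOT = (2^(2 * 3^K3))^(ph * j)" by (simp add: j Lam_def power_mult[symmetric] mult.assoc)
    also have "(2::int)^(2 * 3^K3) = 4^(3^K3)" by (simp add: power_mult)
    finally show ?thesis using d by simp
  qed
  have h2Tb: "int b dvd 2^TOT - 1"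
  proof -
    have d: "int b dvd (2^ph)^(2 * 3^K3 * j) - 1" using h2 by (rule dvd_pow_sub1)
    have "(2::int)^TOT = (2^ph)^(2 * 3^K3 * j)" by (simp add: j Lam_def power_mult[symmetric] algebra_simps)
    then show ?thesis using d by simp
  qed
  have h2TPb: "int b dvd 2^TP - 1"
  proof -
    have d: "int b dvd (2^ph)^(S0 + n) - 1" using h2 by (rule dvd_pow_sub1)
    have "(2::int)^TP = (2^ph)^(S0 + n)" by (simp add: TPe power_mult)
    then show ?thesis using d by simp
  qed
  define DD where "DD = (2::int)^TOT * int x - int (Nn s)"
  have NnsI: "int (Nn s) = 2^TP * int (Nn R) + 3^(f*b) * int NP" using Nns by simp
  have NnRI: "int (Nn R) = 2^Ts * (2^gA * w3) + 3^f * int M" using RP NnA by simp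
  have nTOT: "n \<le> TOT" using TPn cTP TOTe by simp
  have k_eq: "(3::int)^k = 3^(f*b) * 3^p" by (simp add: k_def power_add mult.commute)
  have D1: "(2::int)^n dvd DD - 3^k * int a"
  proof -
    have e: "DD - 3^k * int a = 2^n * (2^(TOT-n) * int x - 2^(TP-n) * int (Nn R)) - 3^(f*b) * (int NP + 3^p * int a)"
    proof -
      have a1: "(2::int)^TOT = 2^n * 2^(TOT-n)" using nTOT by (simp add: power_add[symmetric])
      have a2: "(2::int)^TP = 2^n * 2^(TP-n)" using TPn by (simp add: power_add[symmetric])
      show ?thesis unfolding DD_def NnsI k_eq a1 a2 by (simp add: algebra_simps)
    qed
    show ?thesis unfolding e by (rule dvd_diff[OF dvd_mult2[OF dvd_refl] dvd_mult[OF dNP]])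
  qed
  have D2: "int b dvd DD - 3^k * int a"
  proof -
    have e: "DD - 3^k * int a = int x * (2^TOT - 1) - 2^(TP+Ts) * int (Nn A) - (2^TP - 1) * (3^f * int M)
        - (3^f * int M - c0 * int cnt) - (c0 * int cnt - r)"
      unfolding DD_def NnsI using RP by (simp add: r_def k_eq algebra_simps power_add)
    have dA: "int b dvd int (Nn A)" unfolding NnA using h3 by (simp add: w3_def)
    show ?thesis unfolding e
      by (intro dvd_diff dvd_mult dvd_mult2 h2Tb h2TPb Mb cnt(2) dA)
  qed
  have D3: "(3::int)^K3 dvd DD - 3^k * int a"
  proof -
    have e: "DD - 3^k * int a = int x * (2^TOT - 1) - (w3 * 2^c - u3)"
      unfolding DD_def NnsI NnRI by (simp add: u3_def cTP power_add algebra_simps)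
    show ?thesis unfolding e by (rule dvd_diff[OF dvd_mult[OF h2T3] c(2)])
  qed
  have cop1: "coprime ((2::int)^n) (int b)"
    using cb2i by simp
  have cop2: "coprime ((2::int)^n * int b) (3^K3)"
  proof -
    have "coprime (2::int) 3" by simp
    moreover have "coprime (int b) 3" using cb3i by (simp add: coprime_commute)
    ultimately show ?thesis by simp
  qed
  have Dall: "(2::int)^n * int b * 3^K3 dvd DD - 3^k * int a"
    by (rule divides_mult[OF divides_mult[OF D1 D2 cop1] D3 cop2])
  have dK: "(2::int)^n * int b * 3^K3 = 3^k * int d"
    by (simp add: assms(2) K3_def power_add algebra_simps)
  have "(3::int)^k dvd DD - 3^k * int a" using Dall unfolding dK by (metis dvd_mult_left)
  then have "(3::int)^k dvd DD" by (metis dvd_add_right_iff dvd_triv_left diff_add_cancel)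
  then obtain z0 where z0: "DD = 3^k * z0" by blast
  have DDpos: "DD > 0"
  proof -
    have "Nn s = 2^TP * (2^Ts * Nn A + 3^f * M) + 3^(f*b) * NP" using Nns RP by simp
    also have "\<dots> \<le> 2^TP * (2^Ts * (2^gA * 3^f) + 3^f * M) + 3^(f*b) * NP"
      using NnAle by (intro add_mono mult_le_mono2 order.refl) simp_all
    also have "\<dots> = 2^c * 3^f + 2^TP * (3^f * M) + 3^(f*b) * NP"
      by (simp add: cTP power_add algebra_simps)
    also have "\<dots> \<le> 2^c * 3^f + 2^c * (3^f * M) + 2^c * (3^(f*b) * NP)"
    proof -
      have "(2::nat)^TP \<le> 2^c" using cTP by (simp add: power_increasing)
      moreover have "(1::nat) \<le> 2^c" by simp
      ultimately show ?thesis by (intro add_mono mult_le_mono1 order.refl) (simp_all add: mult_le_mono1)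
    qed
    also have "\<dots> = 2^c * Y" by (simp add: Y_def algebra_simps)
    also have "\<dots> < 2^c * 2^ee"
    proof -
      have "Y \<le> Lam * Y" using Lam0 by simp
      then have "Y \<le> ee" unfolding ee_def by linarith
      then have "Y < 2^ee" using less_exp[of ee] by linarith
      then show ?thesis by simp
    qed
    also have "\<dots> \<le> 2^TOT" by (simp add: TOTe power_add[symmetric] power_increasing)
    also have "\<dots> \<le> 2^TOT * x" using assms(5) by simp
    finally have "Nn s < 2^TOT * x" .
    then have "int (Nn s) < int (2^TOT * x)" by linarith
    then show ?thesis by (simp add: DD_def)
  qed
  have z0pos: "z0 > 0" using DDpos z0 by (simp add: zero_less_mult_iff)
  define z where "z = nat z0"
  have zz: "int z = z0" using z0pos by (simp add: z_def)
  have "(3::int)^k * int d dvd 3^k * (z0 - int a)" using Dall unfolding dK z0 by (simp add: algebra_simps)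
  then have "int d dvd z0 - int a" by simp
  then have zcong: "[z = a] (mod d)" using zz by (simp add: cong_int_iff[symmetric] cong_iff_dvd_diff)
  have vsz: "vs s (of_nat x) = of_nat z"
  proof -
    have "3^(length s - 1) * vs s (of_nat x) = 2^(Tl s) * (of_nat x :: rat) - of_nat (Nn s)"
      by (rule closed[OF sne])
    also have "\<dots> = of_int DD" by (simp add: DD_def TOT_def)
    also have "\<dots> = 3^k * of_nat z" by (simp add: z0 zz[symmetric])
    finally have h: "3^(length s - 1) * vs s (of_nat x) = 3^k * (of_nat z :: rat)" .
    then have "3^k * vs s (of_nat x) = 3^k * (of_nat z :: rat)" unfolding lens .
    then show ?thesis by simp
  qed
  have adm: "s \<in> E x"
    unfolding E_def admissible_def using sne vsz z0pos zz by auto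
  have lenb: "len s \<le> 2 * (b - 1) * ord32 b + n + 1"
  proof (cases "b = 1")
    case True
    then have "f = 1" by (rule fb1')
    then show ?thesis using lens P0(1) True by (simp add: len_def k_def p_def)
  next
    case False
    then have "b \<le> 2 * (b - 1)" using b0 by simp
    then have "f * b \<le> f * (2 * (b - 1))" by (rule mult_le_mono2)
    then have "f * b \<le> 2 * (b - 1) * ord32 b" by (simp add: f_def algebra_simps)
    then show ?thesis using lens P0(1) by (simp add: len_def k_def p_def)
  qed
  show ?thesis using adm vsz zcong lenb by blast
qed

end
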